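(* In the setting of streaming $k$-PCA (below), fix $t\in\mathbb{N}$ and $\eta_t\ge0$, and suppose $V^\top W_{t-1}$ is invertible and $1+\eta_t a_t\neq0$, where $$Y_s=Z^\top W_s(V^\top W_s)^{-1},\quad a_t=\mathbf{x}_t^\top W_{t-1}(V^\top W_{t-1})^{-1}V^\top\mathbf{x}_t,$$ $$B_t=V^\top\mathbf{x}_t\mathbf{x}_t^\top W_{t-1}(V^\top W_{t-1})^{-1},\quad C_t=Z^\top\mathbf{x}_t\mathbf{x}_t^\top W_{t-1}(V^\top W_{t-1})^{-1}.$$ Then $V^\top W_t$ is invertible and, with $X_s=\|Y_s\|_F^2$, $$X_t\le(1-2\eta_t\,\mathsf{gap})X_{t-1}+N_t,$$ where $$N_t=2\eta_t\big(-\mathrm{tr}(Y_{t-1}^\top Y_{t-1}B_t)+\mathbb{E}[\mathrm{tr}(Y_{t-1}^\top Y_{t-1}B_t)\mid\mathcal{F}_{t-1}]+\mathrm{tr}(Y_{t-1}^\top C_t)-\mathbb{E}[\mathrm{tr}(Y_{t-1}^\top C_t)\mid\mathcal{F}_{t-1}]\big)$$ $$+\frac{2\eta_t^2a_t}{1+\eta_ta_t}\big(\mathrm{tr}(Y_{t-1}^\top Y_{t-1}B_t)-\mathrm{tr}(Y_{t-1}^\top C_t)\big)+\frac{2\eta_t^2}{(1+\eta_ta_t)^2}\big(\|Y_{t-1}B_t\|_F^2+\|C_t\|_F^2\big).$$ Consequently, if these hypotheses hold for all $t>T_0$ and $0<1-2\eta_t\mathsf{gap}$ for all $t>T_0$,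 then for all $t>T_0$, $$X_t\le\prod_{t'=T_0+1}^{t}(1-2\eta_{t'}\mathsf{gap})\,(X_{T_0}+M_t),\qquad M_t=\sum_{t'=T_0+1}^{t}\Big(\prod_{t''=T_0+1}^{t'}(1-2\eta_{t''}\mathsf{gap})\Big)^{-1}N_{t'}.$$
   Context: Setting: $\mathcal{D}$ is a distribution on the unit sphere of $\mathbb{R}^n$ with covariance $\Sigma=\mathbb{E}[\mathbf{x}\mathbf{x}^\top]$, eigenvalues $\lambda_1\ge\dots\ge\lambda_n\ge0$, $1\le k<n$, $\mathsf{gap}=\lambda_k-\lambda_{k+1}$. $V\in\mathbb{R}^{n\times k}$ (resp. $Z\in\mathbb{R}^{n\times(n-k)}$) has orthonormal columns spanning the eigenspace of $\Sigma$ for $\lambda_1,\dots,\lambda_k$ (resp. $\lambda_{k+1},\dots,\lambda_n$). $\mathbf{x}_1,\mathbf{x}_2,\dots$ are i.i.d. from $\mathcal{D}$, $W_0\in\mathbb{R}^{n\times k}$, and Oja's update is $W_t=(I+\eta_t\mathbf{x}_t\mathbf{x}_t^\top)W_{t-1}$ with deterministic $\eta_t$. $\mathcal{F}_{t-1}$ is the $\sigma$-algebra generated by $\mathbf{x}_1,\dots,\mathbf{x}_{t-1}$. $\mathrm{tr}$ is the trace and $\|\cdot\|_F$ the Frobenius norm. *)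

theory Defs
  imports "HOL-Analysis.Analysis" "HOL-Probability.Probability"
begin

text \<open>Matrices are Cartesian-space matrices: an r x c real matrix has type real^'c^'r.\<close>

definition outer :: "real^'n \<Rightarrow> real^'m \<Rightarrow> real^'m^'n" where
  "outer u w = (\<chi> i j. u $ i * w $ j)"

definition second_moment :: "(real^'n) measure \<Rightarrow> real^'n^'n" where
  "second_moment D = (\<chi> i j. \<integral>y. y $ i * y $ j \<partial>D)"

primrec oja :: "real^'k^'n \<Rightarrow> (nat \<Rightarrow> real) \<Rightarrow> (nat \<Rightarrow> real^'n) \<Rightarrow> nat \<Rightarrow> real^'k^'n" where
  "oja W0 eta xs 0 = W0"
| "oja W0 eta xs (Suc t) =
     (mat 1 + eta (Suc t) *\<^sub>R outer (xs (Suc t)) (xs (Suc t))) ** oja W0 eta xs t"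

definition Ymat :: "real^'k^'n \<Rightarrow> real^'m^'n \<Rightarrow> real^'k^'n \<Rightarrow> real^'k^'m" where
  "Ymat V Z W = transpose Z ** W ** matrix_inv (transpose V ** W)"

definition acoef :: "real^'k^'n \<Rightarrow> real^'k^'n \<Rightarrow> real^'n \<Rightarrow> real" where
  "acoef V W xv = xv \<bullet> ((W ** matrix_inv (transpose V ** W)) *v (transpose V *v xv))"

definition Bmat :: "real^'k^'n \<Rightarrow> real^'k^'n \<Rightarrow> real^'n \<Rightarrow> real^'k^'k" where
  "Bmat V W xv = transpose V ** outer xv xv ** W ** matrix_inv (transpose V ** W)"

definition Cmat :: "real^'k^'n \<Rightarrow> real^'m^'n \<Rightarrow> real^'k^'n \<Rightarrow> real^'n \<Rightarrow> real^'k^'m" where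
  "Cmat V Z W xv = transpose Z ** outer xv xv ** W ** matrix_inv (transpose V ** W)"

text \<open>The sigma-algebra generated by x_1, ..., x_s (as a sub-measure of P, as required by
  real_cond_exp); for s = 0 it is the trivial sigma-algebra.\<close>
definition gen_filt :: "'w measure \<Rightarrow> (nat \<Rightarrow> 'w \<Rightarrow> real^'n) \<Rightarrow> nat \<Rightarrow> 'w measure" where
  "gen_filt P x s = sigma (space P) {x i -` A \<inter> space P | i A. i \<in> {1..s} \<and> A \<in> sets borel}"

definition Wrv :: "real^'k^'n \<Rightarrow> (nat \<Rightarrow> real) \<Rightarrow> (nat \<Rightarrow> 'w \<Rightarrow> real^'n) \<Rightarrow> nat \<Rightarrow> 'w \<Rightarrow> real^'k^'n" where
  "Wrv W0 eta x t \<omega> = oja W0 eta (\<lambda>s. x s \<omega>) t"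

text \<open>X_t = ||Y_t||_F^2 (the norm on real^'k^'m is the Frobenius norm).\<close>
definition Xrv :: "real^'k^'n \<Rightarrow> real^'m^'n \<Rightarrow> real^'k^'n \<Rightarrow> (nat \<Rightarrow> real) \<Rightarrow> (nat \<Rightarrow> 'w \<Rightarrow> real^'n) \<Rightarrow> nat \<Rightarrow> 'w \<Rightarrow> real" where
  "Xrv V Z W0 eta x t \<omega> = (norm (Ymat V Z (Wrv W0 eta x t \<omega>)))\<^sup>2"

definition trYYB :: "real^'k^'n \<Rightarrow> real^'m^'n \<Rightarrow> real^'k^'n \<Rightarrow> (nat \<Rightarrow> real) \<Rightarrow> (nat \<Rightarrow> 'w \<Rightarrow> real^'n) \<Rightarrow> nat \<Rightarrow> 'w \<Rightarrow> real" where
  "trYYB V Z W0 eta x t \<omega> =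
     (let Wp = Wrv W0 eta x (t - 1) \<omega>; Yp = Ymat V Z Wp
      in trace (transpose Yp ** Yp ** Bmat V Wp (x t \<omega>)))"

definition trYC :: "real^'k^'n \<Rightarrow> real^'m^'n \<Rightarrow> real^'k^'n \<Rightarrow> (nat \<Rightarrow> real) \<Rightarrow> (nat \<Rightarrow> 'w \<Rightarrow> real^'n) \<Rightarrow> nat \<Rightarrow> 'w \<Rightarrow> real" where
  "trYC V Z W0 eta x t \<omega> =
     (let Wp = Wrv W0 eta x (t - 1) \<omega>; Yp = Ymat V Z Wp
      in trace (transpose Yp ** Cmat V Z Wp (x t \<omega>)))"

definition Nrv :: "'w measure \<Rightarrow> real^'k^'n \<Rightarrow> real^'m^'n \<Rightarrow> real^'k^'n \<Rightarrow> (nat \<Rightarrow> real) \<Rightarrow> (nat \<Rightarrow> 'w \<Rightarrow> real^'n) \<Rightarrow> nat \<Rightarrow> 'w \<Rightarrow> real" where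
  "Nrv P V Z W0 eta x t \<omega> =
     (let Wp = Wrv W0 eta x (t - 1) \<omega>; Yp = Ymat V Z Wp;
          a = acoef V Wp (x t \<omega>); B = Bmat V Wp (x t \<omega>); C = Cmat V Z Wp (x t \<omega>);
          f1 = trYYB V Z W0 eta x t; f2 = trYC V Z W0 eta x t;
          F = gen_filt P x (t - 1)
      in 2 * eta t * (- f1 \<omega> + real_cond_exp P F f1 \<omega> + f2 \<omega> - real_cond_exp P F f2 \<omega>)
         + 2 * (eta t)\<^sup>2 * a / (1 + eta t * a) * (f1 \<omega> - f2 \<omega>)
         + 2 * (eta t)\<^sup>2 / (1 + eta t * a)\<^sup>2 * ((norm (Yp ** B))\<^sup>2 + (norm C)\<^sup>2))"

end

theory Submission
  imports Defs
begin

lemma cond_exp_indep_nn: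
  fixes P F :: "'w measure" and G :: "'w \<Rightarrow> 'g::second_countable_topology"
    and X :: "'w \<Rightarrow> 'h::second_countable_topology" and D :: "'h measure"
    and \<psi> :: "'g \<Rightarrow> 'h \<Rightarrow> ennreal"
  assumes P: "prob_space P" and sub: "subalgebra P F"
    and G: "G \<in> borel_measurable F" and X: "X \<in> borel_measurable P"
    and ind: "prob_space.indep_set P (sets F) (sigma_sets (space P) {X -` A \<inter> space P | A. A \<in> sets borel})"
    and DX: "distr P borel X = D"
    and psi: "case_prod \<psi> \<in> borel_measurable (borel \<Otimes>\<^sub>M borel)"
  shows "AE \<omega> in P. nn_cond_exp P F (\<lambda>\<omega>. \<psi> (G \<omega>) (X \<omega>)) \<omega> = (\<integral>\<^sup>+y. \<psi> (G \<omega>) y \<partial>D)"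
proof -
  interpret prob_space P by (rule P)
  interpret S: finite_measure_subalgebra P F by unfold_locales (rule sub)
  interpret D: prob_space D unfolding DX[symmetric] by (rule prob_space_distr) (rule X)
  have GP: "G \<in> borel_measurable P" by (rule measurable_from_subalg[OF sub G])
  have sD: "sets D = sets borel" unfolding DX[symmetric] by simp
  have psiD: "case_prod \<psi> \<in> borel_measurable (borel \<Otimes>\<^sub>M D)"
    using psi by (simp add: measurable_cong_sets[OF sets_pair_measure_cong[OF refl sD] refl])
  have gm: "(\<lambda>g. \<integral>\<^sup>+y. \<psi> g y \<partial>D) \<in> borel_measurable borel"
    using D.borel_measurable_nn_integral_fst[OF psiD] by simp
  have gF: "(\<lambda>\<omega>. \<integral>\<^sup>+y. \<psi> (G \<omega>) y \<partial>D) \<in> borel_measurable F"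
    using measurable_compose[OF G gm] by simp
  have fP: "(\<lambda>\<omega>. \<psi> (G \<omega>) (X \<omega>)) \<in> borel_measurable P"
    using measurable_compose[OF measurable_Pair[OF GP X] psi] by simp
  have "AE \<omega> in P. (\<integral>\<^sup>+y. \<psi> (G \<omega>) y \<partial>D) = nn_cond_exp P F (\<lambda>\<omega>. \<psi> (G \<omega>) (X \<omega>)) \<omega>"
  proof (rule S.nn_cond_exp_charact[OF _ fP gF])
    fix A assume A: "A \<in> sets F"
    define Q where "Q = (\<lambda>\<omega>. (G \<omega>, indicator A \<omega> :: real))"
    have QF: "Q \<in> measurable F (borel \<Otimes>\<^sub>M borel)"
      unfolding Q_def using G A by measurable
    have QP: "Q \<in> measurable P (borel \<Otimes>\<^sub>M borel)"
      by (rule measurable_from_subalg[OF sub QF])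
    have prodrule: "prob (a \<inter> b) = prob a * prob b" if "a \<in> sets F" "b \<in> sigma_sets (space P) {X -` A \<inter> space P | A. A \<in> sets borel}" for a b
      using ind that unfolding indep_sets2_eq by blast
    have sQ: "sigma_finite_measure (distr P (borel \<Otimes>\<^sub>M borel) Q)"
      by (rule prob_space_imp_sigma_finite[OF prob_space_distr[OF QP]])
    have joint: "distr P (borel \<Otimes>\<^sub>M borel) Q \<Otimes>\<^sub>M D = distr P ((borel \<Otimes>\<^sub>M borel) \<Otimes>\<^sub>M borel) (\<lambda>\<omega>. (Q \<omega>, X \<omega>))"
    proof (rule pair_measure_eqI[OF sQ])
      show "sigma_finite_measure D" by (rule prob_space_imp_sigma_finite[OF D.prob_space_axioms])
      show "sets (distr P (borel \<Otimes>\<^sub>M borel) Q \<Otimes>\<^sub>M D) = sets (distr P ((borel \<Otimes>\<^sub>M borel) \<Otimes>\<^sub>M borel) (\<lambda>\<omega>. (Q \<omega>, X \<omega>)))"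
        using sD by (simp cong: sets_pair_measure_cong)
      fix A B assume AB: "A \<in> sets (distr P (borel \<Otimes>\<^sub>M borel) Q)" "B \<in> sets D"
      then have A': "A \<in> sets (borel \<Otimes>\<^sub>M borel)" and B': "B \<in> sets borel" using sD by auto
      have a: "Q -` A \<inter> space P \<in> sets F"
        using QF A' sub unfolding subalgebra_def by (auto simp: measurable_def)
      have b: "X -` B \<inter> space P \<in> sigma_sets (space P) {X -` A \<inter> space P | A. A \<in> sets borel}"
        using B' by (intro sigma_sets.Basic) blast
      have eq: "(\<lambda>\<omega>. (Q \<omega>, X \<omega>)) -` (A \<times> B) \<inter> space P = (Q -` A \<inter> space P) \<inter> (X -` B \<inter> space P)"
        by auto
      have "emeasure (distr P (borel \<Otimes>\<^sub>M borel) Q) A * emeasure D B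
          = emeasure P (Q -` A \<inter> space P) * emeasure P (X -` B \<inter> space P)"
        unfolding DX[symmetric] using A' B' QP X by (simp add: emeasure_distr)
      also have "\<dots> = emeasure P ((Q -` A \<inter> space P) \<inter> (X -` B \<inter> space P))"
        by (simp only: emeasure_eq_measure prodrule[OF a b] ennreal_mult[OF measure_nonneg measure_nonneg])
      also have "\<dots> = emeasure (distr P ((borel \<Otimes>\<^sub>M borel) \<Otimes>\<^sub>M borel) (\<lambda>\<omega>. (Q \<omega>, X \<omega>))) (A \<times> B)"
        unfolding emeasure_distr[OF measurable_Pair[OF QP X] pair_measureI[OF A' B']] eq ..
      finally show "emeasure (distr P (borel \<Otimes>\<^sub>M borel) Q) A * emeasure D B = emeasure (distr P ((borel \<Otimes>\<^sub>M borel) \<Otimes>\<^sub>M borel) (\<lambda>\<omega>. (Q \<omega>, X \<omega>))) (A \<times> B)" .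
    qed
    define h where "h = (\<lambda>z::('g \<times> real) \<times> 'h. ennreal (snd (fst z)) * \<psi> (fst (fst z)) (snd z))"
    have hm: "h \<in> borel_measurable (((borel \<Otimes>\<^sub>M borel) \<Otimes>\<^sub>M borel))"
    proof -
      have "(\<lambda>z::('g \<times> real) \<times> 'h. \<psi> (fst (fst z)) (snd z)) \<in> borel_measurable (((borel \<Otimes>\<^sub>M borel) \<Otimes>\<^sub>M borel))"
        using measurable_compose[OF _ psi, of "\<lambda>z::('g \<times> real) \<times> 'h. (fst (fst z), snd z)"] by simp
      then show ?thesis unfolding h_def by measurable
    qed
    have hmD: "h \<in> borel_measurable (distr P (borel \<Otimes>\<^sub>M borel) Q \<Otimes>\<^sub>M D)"
      using hm by (simp only: measurable_cong_sets[OF sets_pair_measure_cong[OF sets_distr sD] refl])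
    have psi_y: "\<psi> g \<in> borel_measurable D" for g
      using measurable_compose_Pair1[OF _ psiD, of g] by simp
    have "(\<integral>\<^sup>+ \<omega>\<in>A. \<psi> (G \<omega>) (X \<omega>) \<partial>P) = (\<integral>\<^sup>+ \<omega>. h (Q \<omega>, X \<omega>) \<partial>P)"
      by (intro nn_integral_cong) (auto simp: h_def Q_def indicator_def)
    also have "\<dots> = (\<integral>\<^sup>+ z. h z \<partial>distr P ((borel \<Otimes>\<^sub>M borel) \<Otimes>\<^sub>M borel) (\<lambda>\<omega>. (Q \<omega>, X \<omega>)))"
      by (rule nn_integral_distr[OF measurable_Pair[OF QP X], symmetric]) (use hm in simp)
    also have "\<dots> = (\<integral>\<^sup>+ z. h z \<partial>(distr P (borel \<Otimes>\<^sub>M borel) Q \<Otimes>\<^sub>M D))"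
      by (simp add: joint)
    also have "\<dots> = (\<integral>\<^sup>+ q. \<integral>\<^sup>+ y. h (q, y) \<partial>D \<partial>distr P (borel \<Otimes>\<^sub>M borel) Q)"
      by (rule D.nn_integral_fst[OF hmD, symmetric])
    also have "\<dots> = (\<integral>\<^sup>+ q. ennreal (snd q) * (\<integral>\<^sup>+ y. \<psi> (fst q) y \<partial>D) \<partial>distr P (borel \<Otimes>\<^sub>M borel) Q)"
      unfolding h_def fst_conv snd_conv by (intro nn_integral_cong nn_integral_cmult psi_y)
    also have "\<dots> = (\<integral>\<^sup>+ \<omega>. ennreal (snd (Q \<omega>)) * (\<integral>\<^sup>+ y. \<psi> (fst (Q \<omega>)) y \<partial>D) \<partial>P)"
    proof (rule nn_integral_distr[OF QP])
      have m1[measurable]: "(\<lambda>q. \<integral>\<^sup>+ y. \<psi> (fst q) y \<partial>D) \<in> borel_measurable (borel \<Otimes>\<^sub>M borel :: ('g \<times> real) measure)"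
        by (rule measurable_compose[OF measurable_fst gm])
      show "(\<lambda>q. ennreal (snd q) * (\<integral>\<^sup>+ y. \<psi> (fst q) y \<partial>D)) \<in> borel_measurable (distr P (borel \<Otimes>\<^sub>M borel) Q)"
        by simp
    qed
    also have "\<dots> = (\<integral>\<^sup>+ \<omega>\<in>A. (\<integral>\<^sup>+y. \<psi> (G \<omega>) y \<partial>D) \<partial>P)"
      by (intro nn_integral_cong) (auto simp: Q_def indicator_def)
    finally show "(\<integral>\<^sup>+ \<omega>\<in>A. \<psi> (G \<omega>) (X \<omega>) \<partial>P) = (\<integral>\<^sup>+ \<omega>\<in>A. (\<integral>\<^sup>+y. \<psi> (G \<omega>) y \<partial>D) \<partial>P)" .
  qed
  then show ?thesis by auto
qed

lemma cond_exp_indep_real: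
  fixes P F :: "'w measure" and G :: "'w \<Rightarrow> 'g::second_countable_topology"
    and X :: "'w \<Rightarrow> 'h::second_countable_topology" and D :: "'h measure"
    and \<phi> :: "'g \<Rightarrow> 'h \<Rightarrow> real"
  assumes P: "prob_space P" and sub: "subalgebra P F"
    and G: "G \<in> borel_measurable F" and X: "X \<in> borel_measurable P"
    and ind: "prob_space.indep_set P (sets F) (sigma_sets (space P) {X -` A \<inter> space P | A. A \<in> sets borel})"
    and DX: "distr P borel X = D"
    and phi: "case_prod \<phi> \<in> borel_measurable (borel \<Otimes>\<^sub>M borel)"
    and int: "\<And>g. integrable D (\<phi> g)"
  shows "AE \<omega> in P. real_cond_exp P F (\<lambda>\<omega>. \<phi> (G \<omega>) (X \<omega>)) \<omega> = (\<integral>y. \<phi> (G \<omega>) y \<partial>D)"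
proof -
  have m1: "case_prod (\<lambda>g y. ennreal (\<phi> g y)) \<in> borel_measurable (borel \<Otimes>\<^sub>M borel)"
    using phi by (simp add: split_beta')
  have m2: "case_prod (\<lambda>g y. ennreal (- \<phi> g y)) \<in> borel_measurable (borel \<Otimes>\<^sub>M borel)"
    using phi by (simp add: split_beta')
  note a1 = cond_exp_indep_nn[OF P sub G X ind DX m1]
  note a2 = cond_exp_indep_nn[OF P sub G X ind DX m2]
  show ?thesis
    using a1 a2
  proof eventually_elim
    case (elim \<omega>)
    then show ?case
      unfolding real_cond_exp_def using real_lebesgue_integral_def[OF int[of "G \<omega>"]] by simp
  qed
qed

lemma meas_nth[measurable]: "(\<lambda>x::('a::euclidean_space)^'n. x $ i) \<in> borel_measurable borel"
  by (intro borel_measurable_continuous_onI continuous_intros)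

lemma meas_vec:
  fixes f :: "'w \<Rightarrow> ('a::euclidean_space)^'n"
  assumes "\<And>i. (\<lambda>x. f x $ i) \<in> borel_measurable M"
  shows "f \<in> borel_measurable M"
proof (subst borel_measurable_euclidean_space, intro ballI)
  fix b :: "'a^'n" assume "b \<in> Basis"
  then obtain i u where b: "b = axis i u" "u \<in> Basis" unfolding Basis_vec_def by auto
  have "(\<lambda>x. f x $ i \<bullet> u) \<in> borel_measurable M"
    using assms[of i] by measurable
  then show "(\<lambda>x. f x \<bullet> b) \<in> borel_measurable M" by (simp add: b inner_axis)
qed

lemma meas_mat2:
  fixes f :: "'w \<Rightarrow> real^'m^'n"
  assumes "\<And>i j. (\<lambda>x. f x $ i $ j) \<in> borel_measurable M"
  shows "f \<in> borel_measurable M"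
  by (intro meas_vec assms)

lemma meas_mmult[measurable (raw)]:
  fixes f :: "'w \<Rightarrow> real^'k^'n" and g :: "'w \<Rightarrow> real^'m^'k"
  assumes [measurable]: "f \<in> borel_measurable M" "g \<in> borel_measurable M"
  shows "(\<lambda>x. f x ** g x) \<in> borel_measurable M"
  by (intro meas_mat2) (simp add: matrix_matrix_mult_def)

lemma meas_mvmult[measurable (raw)]:
  fixes f :: "'w \<Rightarrow> real^'k^'n" and g :: "'w \<Rightarrow> real^'k"
  assumes [measurable]: "f \<in> borel_measurable M" "g \<in> borel_measurable M"
  shows "(\<lambda>x. f x *v g x) \<in> borel_measurable M"
  by (intro meas_vec) (simp add: matrix_vector_mult_def)

lemma meas_transpose[measurable (raw)]:
  fixes f :: "'w \<Rightarrow> real^'k^'n"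
  assumes [measurable]: "f \<in> borel_measurable M"
  shows "(\<lambda>x. transpose (f x)) \<in> borel_measurable M"
  by (intro meas_mat2) (simp add: transpose_def)

lemma meas_outer[measurable (raw)]:
  fixes f :: "'w \<Rightarrow> real^'n" and g :: "'w \<Rightarrow> real^'m"
  assumes [measurable]: "f \<in> borel_measurable M" "g \<in> borel_measurable M"
  shows "(\<lambda>x. outer (f x) (g x)) \<in> borel_measurable M"
  by (intro meas_mat2) (simp add: outer_def)

lemma meas_det[measurable (raw)]:
  fixes f :: "'w \<Rightarrow> real^'k^'k"
  assumes [measurable]: "f \<in> borel_measurable M"
  shows "(\<lambda>x. det (f x)) \<in> borel_measurable M"
  unfolding det_def by measurable

lemma matrix_inv_props:
  fixes A :: "real^'k^'n"
  assumes "invertible A"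
  shows "A ** matrix_inv A = mat 1" "matrix_inv A ** A = mat 1"
proof -
  have "\<exists>A'. A ** A' = mat 1 \<and> A' ** A = mat 1" using assms unfolding invertible_def .
  from someI_ex[OF this] show "A ** matrix_inv A = mat 1" "matrix_inv A ** A = mat 1"
    unfolding matrix_inv_def by auto
qed

lemma matrix_inv_noninv:
  fixes A B :: "real^'k^'n"
  assumes "\<not> invertible A" "\<not> invertible B"
  shows "matrix_inv A = matrix_inv B"
proof -
  have "(\<lambda>A'. A ** A' = mat 1 \<and> A' ** A = mat 1) = (\<lambda>A'. B ** A' = mat 1 \<and> A' ** B = mat 1)"
    using assms unfolding invertible_def by auto
  then show ?thesis unfolding matrix_inv_def by simp
qed

lemma matrix_inv_formula:
  fixes A :: "real^'k^'k"
  shows "matrix_inv A = (if det A \<noteq> 0 then (\<chi> i j. det (\<chi> r c. if c = i then (if r = j then 1 else 0) else A$r$c) / det A)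
           else matrix_inv (0::real^'k^'k))"
proof (cases "det A = 0")
  case True
  have "\<not> invertible A" using True invertible_det_nz by blast
  moreover have "\<not> invertible (0::real^'k^'k)"
  proof
    assume "invertible (0::real^'k^'k)"
    then obtain A' :: "real^'k^'k" where "0 ** A' = mat 1" unfolding invertible_def by blast
    then have "(mat 1 :: real^'k^'k) = 0" by simp
    then have "(mat 1 :: real^'k^'k) $ undefined $ undefined = 0" by simp
    then show False by (simp add: mat_def)
  qed
  ultimately show ?thesis using True matrix_inv_noninv by auto
next
  case False
  then have inv: "invertible A" using invertible_det_nz by blast
  have "matrix_inv A $ i $ j = det (\<chi> r c. if c = i then (if r = j then 1 else 0) else A$r$c) / det A" for i j
  proof -
    have "A *v (matrix_inv A *v axis j 1) = axis j 1"
      by (simp add: matrix_vector_mul_assoc matrix_inv_props(1)[OF inv])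
    then have "matrix_inv A *v axis j 1 = (\<chi> k. det(\<chi> r c. if c=k then (axis j 1 :: real^'k)$r else A$r$c) / det A)"
      using cramer[OF False] by blast
    then have "(matrix_inv A *v axis j 1) $ i = det(\<chi> r c. if c=i then (axis j 1 :: real^'k)$r else A$r$c) / det A"
      by simp
    moreover have "(matrix_inv A *v axis j 1) $ i = matrix_inv A $ i $ j"
      by (simp add: matrix_vector_mult_def axis_def if_distrib cong: if_cong)
    moreover have ax: "(axis j 1 :: real^'k) $ r = (if r = j then 1 else 0)" for r by (simp add: axis_def)
    ultimately show ?thesis by (simp only: ax)
  qed
  then show ?thesis using False by (simp add: vec_eq_iff)
qed

lemma meas_matrix_inv[measurable (raw)]:
  fixes f :: "'w \<Rightarrow> real^'k^'k"
  assumes [measurable]: "f \<in> borel_measurable M"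
  shows "(\<lambda>x. matrix_inv (f x)) \<in> borel_measurable M"
proof -
  have [measurable]: "(\<lambda>x. det (\<chi> r c. if c = i then (if r = j then 1 else 0) else f x$r$c)) \<in> borel_measurable M" for i j
    by (intro meas_det meas_mat2) simp
  have eq: "(\<lambda>x. matrix_inv (f x)) = (\<lambda>x. if det (f x) \<noteq> 0 then (\<chi> i j. det (\<chi> r c. if c = i then (if r = j then 1 else 0) else f x$r$c) / det (f x))
           else matrix_inv (0::real^'k^'k))"
    by (rule ext, rule matrix_inv_formula)
  show ?thesis
    unfolding eq
    by (intro measurable_If meas_mat2) (simp_all add: pred_def)
qed

lemma gen_filt_sets:
  assumes "\<And>t. x t \<in> borel_measurable P"
  shows "sets (gen_filt P x s) = sigma_sets (space P) {x i -` A \<inter> space P | i A. i \<in> {1..s} \<and> A \<in> sets borel}"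
    and "space (gen_filt P x s) = space P"
  unfolding gen_filt_def by (auto intro!: sets_measure_of space_measure_of_conv)

lemma gen_filt_sub:
  assumes "\<And>t. x t \<in> borel_measurable P"
  shows "subalgebra P (gen_filt P x s)"
  unfolding subalgebra_def gen_filt_sets[OF assms]
proof
  show "sigma_sets (space P) {x i -` A \<inter> space P |i A. i \<in> {1..s} \<and> A \<in> sets borel} \<subseteq> sets P"
    by (rule sets.sigma_sets_subset) (use assms in \<open>auto simp: measurable_sets\<close>)
qed simp

lemma gen_filt_meas:
  fixes x :: "nat \<Rightarrow> 'w \<Rightarrow> real^'n"
  assumes "\<And>t. x t \<in> borel_measurable P" "1 \<le> i" "i \<le> s"
  shows "x i \<in> borel_measurable (gen_filt P x s)"
proof (rule measurableI)
  fix A :: "(real^'n) set" assume A: "A \<in> sets borel"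
  show "x i -` A \<inter> space (gen_filt P x s) \<in> sets (gen_filt P x s)"
    unfolding gen_filt_sets[OF assms(1)]
    by (intro sigma_sets.Basic CollectI exI[of _ i] exI[of _ A] conjI refl) (use assms(2,3) A in auto)
qed simp

lemma gen_filt_indep:
  fixes x :: "nat \<Rightarrow> 'w \<Rightarrow> real^'n"
  assumes P: "prob_space P" and xm: "\<And>t. x t \<in> borel_measurable P"
    and ind: "prob_space.indep_vars P (\<lambda>_. borel) x {1..}"
  shows "prob_space.indep_set P (sets (gen_filt P x s)) (sigma_sets (space P) {x (Suc s) -` A \<inter> space P | A. A \<in> sets borel})"
proof -
  interpret prob_space P by (rule P)
  define E where "E i = {x i -` A \<inter> space P | A. A \<in> sets borel}" for i
  define I where "I b = (if b then {1..s} else {Suc s})" for b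
  have i1: "indep_sets E {1..}" using ind unfolding indep_vars_def2 E_def by auto
  have i2: "indep_sets E (\<Union>j\<in>UNIV. I j)"
    by (rule indep_sets_mono_index[OF _ i1]) (auto simp: I_def)
  have st: "Int_stable (E i)" for i
    unfolding E_def Int_stable_def
    apply auto
    apply (rule_tac x="A \<inter> Aa" in exI)
    apply auto
    done
  have dj: "disjoint_family_on I UNIV"
    unfolding disjoint_family_on_def I_def by auto
  have i3: "indep_sets (\<lambda>j. sigma_sets (space P) (\<Union>i\<in>I j. E i)) UNIV"
    by (rule indep_sets_collect_sigma[OF i2 st dj])
  have eqT: "(\<Union>i\<in>I True. E i) = {x i -` A \<inter> space P | i A. i \<in> {1..s} \<and> A \<in> sets borel}"
  proof (intro set_eqI iffI)
    fix z assume "z \<in> (\<Union>i\<in>I True. E i)"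
    then obtain i where i: "i \<in> {1..s}" "z \<in> E i" unfolding I_def by auto
    then obtain A where "z = x i -` A \<inter> space P" "A \<in> sets borel" unfolding E_def by auto
    then show "z \<in> {x i -` A \<inter> space P | i A. i \<in> {1..s} \<and> A \<in> sets borel}" using i(1) by blast
  next
    fix z assume "z \<in> {x i -` A \<inter> space P | i A. i \<in> {1..s} \<and> A \<in> sets borel}"
    then obtain i A where h: "z = x i -` A \<inter> space P" "A \<in> sets borel" "i \<in> {1..s}" by blast
    have "i \<in> I True" using h(3) unfolding I_def by simp
    moreover have "z \<in> E i" unfolding E_def using h(1,2) by blast
    ultimately show "z \<in> (\<Union>i\<in>I True. E i)" by blast
  qed
  have eqF: "(\<Union>i\<in>I False. E i) = {x (Suc s) -` A \<inter> space P | A. A \<in> sets borel}"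
    unfolding I_def E_def by auto
  show ?thesis
    unfolding indep_set_def
    by (rule indep_sets_mono_sets[OF i3])
       (auto split: bool.split simp: eqT eqF gen_filt_sets[OF xm])
qed

lemma mm_rdistrib: "((A::real^'k^'n) + B) ** (C::real^'m^'k) = A ** C + B ** C"
  by (vector matrix_matrix_mult_def sum.distrib[symmetric] field_simps)
lemma mm_rdiff: "((A::real^'k^'n) - B) ** (C::real^'m^'k) = A ** C - B ** C"
  by (vector matrix_matrix_mult_def sum_subtractf[symmetric] field_simps)
lemma mm_ldiff: "(A::real^'k^'n) ** ((B::real^'m^'k) - C) = A ** B - A ** C"
  by (vector matrix_matrix_mult_def sum_subtractf[symmetric] field_simps)
lemma mm_scaleR_left: "(k *\<^sub>R (A::real^'k^'n)) ** (B::real^'m^'k) = k *\<^sub>R (A ** B)"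
  by (simp add: scalar_matrix_assoc)
lemma mm_scaleR_right: "(A::real^'k^'n) ** (k *\<^sub>R (B::real^'m^'k)) = k *\<^sub>R (A ** B)"
  by (simp add: matrix_scalar_ac scalar_matrix_assoc)

lemma outer_sandwich:
  fixes xv :: "real^'n" and K :: "real^'n^'n"
  shows "outer xv xv ** K ** outer xv xv = (xv \<bullet> (K *v xv)) *\<^sub>R outer xv xv"
proof -
  have "(outer xv xv ** K ** outer xv xv) $ i $ j = ((xv \<bullet> (K *v xv)) *\<^sub>R outer xv xv) $ i $ j" for i j
  proof -
    have "(outer xv xv ** K ** outer xv xv) $ i $ j = (\<Sum>l\<in>UNIV. (\<Sum>m\<in>UNIV. xv$i * xv$m * K$m$l) * (xv$l * xv$j))"
      by (simp add: matrix_matrix_mult_def outer_def)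
    also have "\<dots> = xv$i * xv$j * (\<Sum>m\<in>UNIV. xv$m * (\<Sum>l\<in>UNIV. K$m$l * xv$l))"
      by (simp add: sum_distrib_left sum_distrib_right mult_ac) (subst sum.swap, simp add: mult_ac)
    also have "\<dots> = ((xv \<bullet> (K *v xv)) *\<^sub>R outer xv xv) $ i $ j"
      by (simp add: outer_def inner_vec_def matrix_vector_mult_def mult_ac)
    finally show ?thesis .
  qed
  then show ?thesis by (simp add: vec_eq_iff)
qed

lemma matrix_inv_unique:
  fixes A :: "real^'k^'n"
  assumes "A ** A' = mat 1" "A' ** A = mat 1"
  shows "matrix_inv A = A'"
proof -
  have inv: "invertible A" using assms unfolding invertible_def by blast
  have "matrix_inv A = matrix_inv A ** (A ** A')" by (simp add: assms)
  also have "\<dots> = A'" by (simp add: matrix_mul_assoc matrix_inv_props(2)[OF inv])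
  finally show ?thesis .
qed

lemma step_identity:
  fixes V :: "real^'k^'n" and Z :: "real^'m^'n" and W :: "real^'k^'n" and xv :: "real^'n" and \<eta> :: real
  assumes inv: "invertible (transpose V ** W)" and ne: "1 + \<eta> * acoef V W xv \<noteq> 0"
  shows "invertible (transpose V ** ((mat 1 + \<eta> *\<^sub>R outer xv xv) ** W))"
    and "Ymat V Z ((mat 1 + \<eta> *\<^sub>R outer xv xv) ** W) = Ymat V Z W +
           (\<eta> / (1 + \<eta> * acoef V W xv)) *\<^sub>R (Cmat V Z W xv - Ymat V Z W ** Bmat V W xv)"
proof -
  define M where "M = matrix_inv (transpose V ** W)"
  define a where "a = acoef V W xv"
  define B where "B = Bmat V W xv"
  define C where "C = Cmat V Z W xv"
  define Y where "Y = Ymat V Z W"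
  define c where "c = \<eta> / (1 + \<eta> * a)"
  define Ox where "Ox = outer xv xv"
  have M1: "transpose V ** W ** M = mat 1" and M2: "M ** (transpose V ** W) = mat 1"
    using matrix_inv_props[OF inv] by (simp_all add: M_def)
  have OKO: "Ox ** (W ** M ** transpose V) ** Ox = a *\<^sub>R Ox"
    unfolding Ox_def a_def acoef_def M_def by (simp only: outer_sandwich matrix_vector_mul_assoc)
  have B_def': "B = transpose V ** Ox ** W ** M" by (simp add: B_def Bmat_def Ox_def M_def)
  have C_def': "C = transpose Z ** Ox ** W ** M" by (simp add: C_def Cmat_def Ox_def M_def)
  have Y_def': "Y = transpose Z ** W ** M" by (simp add: Y_def Ymat_def M_def)
  have BB: "B ** B = a *\<^sub>R B"
  proof -
    have "B ** B = transpose V ** (Ox ** (W ** M ** transpose V) ** Ox) ** W ** M"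
      by (simp add: B_def' matrix_mul_assoc)
    also have "\<dots> = a *\<^sub>R B" unfolding OKO B_def' by (simp add: mm_scaleR_left mm_scaleR_right)
    finally show ?thesis .
  qed
  have CB: "C ** B = a *\<^sub>R C"
  proof -
    have "C ** B = transpose Z ** (Ox ** (W ** M ** transpose V) ** Ox) ** W ** M"
      by (simp add: B_def' C_def' matrix_mul_assoc)
    also have "\<dots> = a *\<^sub>R C" unfolding OKO C_def' by (simp add: mm_scaleR_left mm_scaleR_right)
    finally show ?thesis .
  qed
  have ca: "\<eta> - c - \<eta> * c * a = 0"
    using ne unfolding c_def a_def[symmetric] by (simp add: field_simps)
  have L: "(mat 1 + \<eta> *\<^sub>R B) ** (mat 1 - c *\<^sub>R B) = mat 1"
  proof -
    have "(mat 1 + \<eta> *\<^sub>R B) ** (mat 1 - c *\<^sub>R B) = mat 1 + (\<eta> - c - \<eta> * c * a) *\<^sub>R B"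
      by (simp add: matrix_add_ldistrib mm_rdistrib mm_ldiff mm_rdiff mm_scaleR_left mm_scaleR_right BB
            algebra_simps)
    then show ?thesis using ca by simp
  qed
  have R: "(mat 1 - c *\<^sub>R B) ** (mat 1 + \<eta> *\<^sub>R B) = mat 1"
  proof -
    have "(mat 1 - c *\<^sub>R B) ** (mat 1 + \<eta> *\<^sub>R B) = mat 1 + (\<eta> - c - \<eta> * c * a) *\<^sub>R B"
      by (simp add: matrix_add_ldistrib mm_rdistrib mm_ldiff mm_rdiff mm_scaleR_left mm_scaleR_right BB
            algebra_simps)
    then show ?thesis using ca by simp
  qed
  have VW': "transpose V ** ((mat 1 + \<eta> *\<^sub>R Ox) ** W) = (mat 1 + \<eta> *\<^sub>R B) ** (transpose V ** W)"
  proof -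
    have "B ** (transpose V ** W) = transpose V ** Ox ** W"
      by (simp add: B_def' matrix_mul_assoc[symmetric] M2)
    then show ?thesis
      by (simp add: matrix_add_ldistrib mm_rdistrib mm_scaleR_left mm_scaleR_right matrix_mul_assoc)
  qed
  define Ni where "Ni = M ** (mat 1 - c *\<^sub>R B)"
  have I1: "(transpose V ** ((mat 1 + \<eta> *\<^sub>R Ox) ** W)) ** Ni = mat 1"
  proof -
    have "(transpose V ** ((mat 1 + \<eta> *\<^sub>R Ox) ** W)) ** Ni
        = (mat 1 + \<eta> *\<^sub>R B) ** ((transpose V ** W) ** M) ** (mat 1 - c *\<^sub>R B)"
      unfolding VW' Ni_def by (simp only: matrix_mul_assoc)
    also have "\<dots> = mat 1" using M1 L by simp
    finally show ?thesis .
  qed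
  have I2: "Ni ** (transpose V ** ((mat 1 + \<eta> *\<^sub>R Ox) ** W)) = mat 1"
  proof -
    have "Ni ** (transpose V ** ((mat 1 + \<eta> *\<^sub>R Ox) ** W))
        = M ** ((mat 1 - c *\<^sub>R B) ** (mat 1 + \<eta> *\<^sub>R B)) ** (transpose V ** W)"
      unfolding VW' Ni_def by (simp only: matrix_mul_assoc)
    also have "\<dots> = mat 1" using M2 R by simp
    finally show ?thesis .
  qed
  show "invertible (transpose V ** ((mat 1 + \<eta> *\<^sub>R outer xv xv) ** W))"
    using I1 I2 unfolding invertible_def Ox_def by blast
  have inv': "matrix_inv (transpose V ** ((mat 1 + \<eta> *\<^sub>R Ox) ** W)) = Ni"
    by (rule matrix_inv_unique[OF I1 I2])
  have ZW': "transpose Z ** ((mat 1 + \<eta> *\<^sub>R Ox) ** W) ** M = Y + \<eta> *\<^sub>R C"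
    by (simp add: Y_def' C_def' matrix_add_ldistrib mm_rdistrib mm_scaleR_left mm_scaleR_right matrix_mul_assoc)
  have "Ymat V Z ((mat 1 + \<eta> *\<^sub>R Ox) ** W) = (Y + \<eta> *\<^sub>R C) ** (mat 1 - c *\<^sub>R B)"
    unfolding Ymat_def inv' Ni_def using ZW' by (simp add: matrix_mul_assoc)
  also have "\<dots> = Y + \<eta> *\<^sub>R C - c *\<^sub>R (Y ** B) - (\<eta> * c * a) *\<^sub>R C"
    by (simp add: matrix_add_ldistrib mm_rdistrib mm_ldiff mm_rdiff mm_scaleR_left mm_scaleR_right CB scaleR_add_right)
  also have "\<dots> = Y + c *\<^sub>R (C - Y ** B)"
  proof -
    have "\<eta> - \<eta> * c * a = c" using ca by simp
    then have "\<eta> *\<^sub>R C - (\<eta> * c * a) *\<^sub>R C = c *\<^sub>R C" by (metis scaleR_left_diff_distrib)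
    then show ?thesis by (simp add: algebra_simps)
  qed
  finally show "Ymat V Z ((mat 1 + \<eta> *\<^sub>R outer xv xv) ** W) = Ymat V Z W +
           (\<eta> / (1 + \<eta> * acoef V W xv)) *\<^sub>R (Cmat V Z W xv - Ymat V Z W ** Bmat V W xv)"
    by (simp add: Ox_def Y_def c_def a_def B_def C_def)
qed

definition diagm :: "('k \<Rightarrow> real) \<Rightarrow> real^'k^'k" where
  "diagm l = (\<chi> i j. if i = j then l i else 0)"

lemma trace_inner: "trace (transpose (A::real^'k^'m) ** B) = A \<bullet> B"
  by (simp add: trace_def transpose_def matrix_matrix_mult_def inner_vec_def) (subst sum.swap, simp)

lemma norm_sq_entries: "(norm (A::real^'k^'m))\<^sup>2 = (\<Sum>i\<in>UNIV. \<Sum>j\<in>UNIV. (A$i$j)\<^sup>2)"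
  unfolding power2_norm_eq_inner inner_vec_def by (simp add: power2_eq_square)

lemma sum_if_delta1: fixes k :: "'k::finite" shows "(\<Sum>j\<in>UNIV. a j * (if j = k then b j else 0)) = a k * (b k::real)"
proof -
  have "(\<Sum>j\<in>UNIV. a j * (if j = k then b j else 0)) = (\<Sum>j\<in>UNIV. if j = k then a j * b j else 0)"
    by (rule sum.cong) auto
  also have "\<dots> = a k * b k" by simp
  finally show ?thesis .
qed

lemma sum_if_delta2: fixes k :: "'k::finite" shows "(\<Sum>j\<in>UNIV. (if k = j then b j else 0) * a j) = a k * (b k::real)"
proof -
  have "(\<Sum>j\<in>UNIV. (if k = j then b j else 0) * a j) = (\<Sum>j\<in>UNIV. if j = k then a j * b j else 0)"
    by (rule sum.cong) auto
  also have "\<dots> = a k * b k" by simp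
  finally show ?thesis .
qed

lemma trace_expand:
  fixes A :: "real^'n^'p" and S :: "real^'n^'n" and Bm :: "real^'p^'n"
  shows "trace (A ** S ** Bm) = (\<Sum>k\<in>UNIV. \<Sum>j\<in>UNIV. \<Sum>i\<in>UNIV. A$k$i * S$i$j * Bm$j$k)"
  by (simp add: trace_def matrix_matrix_mult_def sum_distrib_right)

lemma quad_int:
  fixes D :: "(real^'n) measure" and A :: "real^'n^'p" and Bm :: "real^'p^'n"
  assumes D: "prob_space D" and sD: "sets D = sets borel" and sph: "AE y in D. norm y = 1"
  shows "integrable D (\<lambda>y. trace (A ** outer y y ** Bm))"
    and "(\<integral>y. trace (A ** outer y y ** Bm) \<partial>D) = trace (A ** second_moment D ** Bm)"
proof -
  interpret prob_space D by (rule D)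
  have mD: "f \<in> borel_measurable D" if "f \<in> borel_measurable borel" for f :: "real^'n \<Rightarrow> real"
    by (subst measurable_cong_sets[OF sD refl]) (rule that)
  have int: "integrable D (\<lambda>y. y$i * y$j)" for i j
  proof (rule integrable_const_bound[where B=1])
    show "AE y in D. norm (y$i * y$j) \<le> 1"
      using sph
    proof eventually_elim
      case (elim y)
      have a: "\<bar>y$i\<bar> \<le> 1" using component_le_norm_cart[of y i] elim by simp
      have b: "\<bar>y$j\<bar> \<le> 1" using component_le_norm_cart[of y j] elim by simp
      have "\<bar>y$i\<bar> * \<bar>y$j\<bar> \<le> 1" by (rule mult_le_one[OF a abs_ge_zero b])
      then show ?case by (simp add: abs_mult)
    qed
    show "(\<lambda>y. y$i * y$j) \<in> borel_measurable D" by (rule mD) measurable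
  qed
  have eq: "trace (A ** outer y y ** Bm) = (\<Sum>k\<in>UNIV. \<Sum>j\<in>UNIV. \<Sum>i\<in>UNIV. A$k$i * (y$i * y$j) * Bm$j$k)" for y
    by (simp add: trace_expand outer_def)
  have i3: "integrable D (\<lambda>y. A$k$i * (y$i * y$j) * Bm$j$k)" for k j i
    by (rule integrable_mult_left, rule integrable_mult_right, rule int)
  have i2: "integrable D (\<lambda>y. \<Sum>i\<in>UNIV. A$k$i * (y$i * y$j) * Bm$j$k)" for k j
    using i3 by auto
  have i1: "integrable D (\<lambda>y. \<Sum>j\<in>UNIV. \<Sum>i\<in>UNIV. A$k$i * (y$i * y$j) * Bm$j$k)" for k
    using i2 by auto
  show "integrable D (\<lambda>y. trace (A ** outer y y ** Bm))"
    unfolding eq using i1 by auto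
  have t: "(\<integral>y. A$k$i * (y$i * y$j) * Bm$j$k \<partial>D) = A$k$i * (\<integral>y. y$i * y$j \<partial>D) * Bm$j$k" for k j i
    by (simp only: integral_mult_left_zero integral_mult_right_zero)
  have "(\<integral>y. trace (A ** outer y y ** Bm) \<partial>D) = (\<Sum>k\<in>UNIV. \<Sum>j\<in>UNIV. \<Sum>i\<in>UNIV. (\<integral>y. A$k$i * (y$i * y$j) * Bm$j$k \<partial>D))"
    unfolding eq
    using i1 i2 i3 by (simp del: integral_mult_left_zero integral_mult_right_zero)
  also have "\<dots> = (\<Sum>k\<in>UNIV. \<Sum>j\<in>UNIV. \<Sum>i\<in>UNIV. A$k$i * (\<integral>y. y$i * y$j \<partial>D) * Bm$j$k)"
    by (simp only: t)
  also have "\<dots> = trace (A ** second_moment D ** Bm)"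
    by (simp add: trace_expand second_moment_def)
  finally show "(\<integral>y. trace (A ** outer y y ** Bm) \<partial>D) = trace (A ** second_moment D ** Bm)" .
qed

lemma second_moment_sym: "transpose (second_moment D) = second_moment D"
  by (simp add: transpose_def second_moment_def mult.commute vec_eq_iff)

lemma eig_left:
  fixes S :: "real^'n^'n" and V :: "real^'k^'n"
  assumes sym: "transpose S = S" and eig: "\<And>j. S *v column j V = l j *\<^sub>R column j V"
  shows "transpose V ** S = diagm l ** transpose V"
proof -
  have "(transpose V ** S) $ j $ c = (diagm l ** transpose V) $ j $ c" for j c
  proof -
    have "(transpose V ** S) $ j $ c = (\<Sum>r\<in>UNIV. S$c$r * V$r$j)"
    proof -
      have "S $ r $ c = S $ c $ r" for r using sym by (metis transpose_def vec_lambda_beta)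
      then show ?thesis by (simp add: matrix_matrix_mult_def transpose_def mult.commute)
    qed
    also have "\<dots> = (S *v column j V) $ c" by (simp add: matrix_vector_mult_def column_def)
    also have "\<dots> = l j * V$c$j" using eig[of j] by (simp add: column_def)
    also have "\<dots> = (diagm l ** transpose V) $ j $ c"
      by (simp add: matrix_matrix_mult_def diagm_def transpose_def if_distrib if_distribR cong: if_cong)
    finally show ?thesis .
  qed
  then show ?thesis by (simp add: vec_eq_iff)
qed

lemma trace_YYdiag:
  fixes Y :: "real^'k^'m"
  assumes "\<And>j. m \<le> l j"
  shows "m * (norm Y)\<^sup>2 \<le> trace (transpose Y ** Y ** diagm l)"
proof -
  have "trace (transpose Y ** Y ** diagm l) = (\<Sum>j\<in>UNIV. (transpose Y ** Y)$j$j * l j)"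
    unfolding trace_def by (simp add: matrix_matrix_mult_def diagm_def sum_if_delta1)
  also have "\<dots> = (\<Sum>j\<in>UNIV. \<Sum>i\<in>UNIV. l j * (Y$i$j)\<^sup>2)"
    by (simp add: matrix_matrix_mult_def transpose_def sum_distrib_left sum_distrib_right power2_eq_square mult_ac)
  also have "\<dots> = (\<Sum>i\<in>UNIV. \<Sum>j\<in>UNIV. l j * (Y$i$j)\<^sup>2)"
    by (rule sum.swap)
  finally have "trace (transpose Y ** Y ** diagm l) = (\<Sum>i\<in>UNIV. \<Sum>j\<in>UNIV. l j * (Y$i$j)\<^sup>2)" .
  moreover have "m * (norm Y)\<^sup>2 = (\<Sum>i\<in>UNIV. \<Sum>j\<in>UNIV. m * (Y$i$j)\<^sup>2)"
    by (simp add: norm_sq_entries sum_distrib_left)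
  moreover have "(\<Sum>i\<in>UNIV. \<Sum>j\<in>UNIV. m * (Y$i$j)\<^sup>2) \<le> (\<Sum>i\<in>UNIV. \<Sum>j\<in>UNIV. l j * (Y$i$j)\<^sup>2)"
    by (intro sum_mono mult_right_mono assms) simp
  ultimately show ?thesis by simp
qed

lemma trace_YdiagY:
  fixes Y :: "real^'k^'m"
  assumes "\<And>j. l j \<le> m"
  shows "trace (transpose Y ** diagm l ** Y) \<le> m * (norm Y)\<^sup>2"
proof -
  have e1: "(transpose Y ** diagm l) $ k $ i = Y$i$k * l i" for k i
    by (simp add: matrix_matrix_mult_def diagm_def transpose_def sum_if_delta1)
  have "trace (transpose Y ** diagm l ** Y) = (\<Sum>k\<in>UNIV. \<Sum>i\<in>UNIV. Y$i$k * l i * Y$i$k)"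
    unfolding trace_def by (simp add: matrix_matrix_mult_def[of "transpose Y ** diagm l"] e1)
  also have "\<dots> = (\<Sum>i\<in>UNIV. \<Sum>j\<in>UNIV. l i * (Y$i$j)\<^sup>2)"
    by (subst sum.swap) (simp add: power2_eq_square mult_ac)
  finally have "trace (transpose Y ** diagm l ** Y) = (\<Sum>i\<in>UNIV. \<Sum>j\<in>UNIV. l i * (Y$i$j)\<^sup>2)" .
  moreover have "m * (norm Y)\<^sup>2 = (\<Sum>i\<in>UNIV. \<Sum>j\<in>UNIV. m * (Y$i$j)\<^sup>2)"
    by (simp add: norm_sq_entries sum_distrib_left)
  moreover have "(\<Sum>i\<in>UNIV. \<Sum>j\<in>UNIV. l i * (Y$i$j)\<^sup>2) \<le> (\<Sum>i\<in>UNIV. \<Sum>j\<in>UNIV. m * (Y$i$j)\<^sup>2)"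
    by (intro sum_mono mult_right_mono assms) simp
  ultimately show ?thesis by simp
qed

lemma expect_E1:
  fixes D :: "(real^'n) measure" and V :: "real^'k^'n" and Z :: "real^'m^'n" and W :: "real^'k^'n"
  assumes D: "prob_space D" and sD: "sets D = sets borel" and sph: "AE y in D. norm y = 1"
  shows "integrable D (\<lambda>y. trace (transpose (Ymat V Z W) ** Ymat V Z W ** Bmat V W y))"
    and "integrable D (\<lambda>y. trace (transpose (Ymat V Z W) ** Cmat V Z W y))"
    and "(\<integral>y. trace (transpose (Ymat V Z W) ** Ymat V Z W ** Bmat V W y) \<partial>D)
          = trace ((transpose (Ymat V Z W) ** Ymat V Z W ** transpose V) ** second_moment D ** (W ** matrix_inv (transpose V ** W)))"
    and "(\<integral>y. trace (transpose (Ymat V Z W) ** Cmat V Z W y) \<partial>D)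
          = trace ((transpose (Ymat V Z W) ** transpose Z) ** second_moment D ** (W ** matrix_inv (transpose V ** W)))"
proof -
  define Y where "Y = Ymat V Z W"
  define M where "M = matrix_inv (transpose V ** W)"
  have e1: "trace (transpose Y ** Y ** Bmat V W y) = trace ((transpose Y ** Y ** transpose V) ** outer y y ** (W ** M))" for y
    unfolding Bmat_def M_def by (simp only: matrix_mul_assoc)
  have e2: "trace (transpose Y ** Cmat V Z W y) = trace ((transpose Y ** transpose Z) ** outer y y ** (W ** M))" for y
    unfolding Cmat_def M_def by (simp only: matrix_mul_assoc)
  show "integrable D (\<lambda>y. trace (transpose (Ymat V Z W) ** Ymat V Z W ** Bmat V W y))"
    unfolding Y_def[symmetric] e1 by (rule quad_int(1)[OF D sD sph])
  show "integrable D (\<lambda>y. trace (transpose (Ymat V Z W) ** Cmat V Z W y))"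
    unfolding Y_def[symmetric] e2 by (rule quad_int(1)[OF D sD sph])
  show "(\<integral>y. trace (transpose (Ymat V Z W) ** Ymat V Z W ** Bmat V W y) \<partial>D)
          = trace ((transpose (Ymat V Z W) ** Ymat V Z W ** transpose V) ** second_moment D ** (W ** matrix_inv (transpose V ** W)))"
    unfolding Y_def[symmetric] M_def[symmetric] e1 by (rule quad_int(2)[OF D sD sph])
  show "(\<integral>y. trace (transpose (Ymat V Z W) ** Cmat V Z W y) \<partial>D)
          = trace ((transpose (Ymat V Z W) ** transpose Z) ** second_moment D ** (W ** matrix_inv (transpose V ** W)))"
    unfolding Y_def[symmetric] M_def[symmetric] e2 by (rule quad_int(2)[OF D sD sph])
qed

lemma E1_value:
  fixes S :: "real^'n^'n" and V :: "real^'k^'n" and Z :: "real^'m^'n" and W :: "real^'k^'n"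
  assumes inv: "invertible (transpose V ** W)"
    and VS: "transpose V ** S = diagm lamV ** transpose V"
    and ZS: "transpose Z ** S = diagm lamZ ** transpose Z"
  shows "trace ((transpose (Ymat V Z W) ** Ymat V Z W ** transpose V) ** S ** (W ** matrix_inv (transpose V ** W)))
          = trace (transpose (Ymat V Z W) ** Ymat V Z W ** diagm lamV)"
    and "trace ((transpose (Ymat V Z W) ** transpose Z) ** S ** (W ** matrix_inv (transpose V ** W)))
          = trace (transpose (Ymat V Z W) ** diagm lamZ ** Ymat V Z W)"
proof -
  define Y where "Y = Ymat V Z W"
  define M where "M = matrix_inv (transpose V ** W)"
  have M1: "transpose V ** W ** M = mat 1" using matrix_inv_props(1)[OF inv] by (simp add: M_def)
  have "(transpose Y ** Y ** transpose V) ** S ** (W ** M) = transpose Y ** Y ** (transpose V ** S) ** (W ** M)"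
    by (simp only: matrix_mul_assoc)
  also have "\<dots> = transpose Y ** Y ** diagm lamV ** (transpose V ** W ** M)"
    unfolding VS by (simp only: matrix_mul_assoc)
  also have "\<dots> = transpose Y ** Y ** diagm lamV" by (simp add: M1)
  finally show "trace ((transpose (Ymat V Z W) ** Ymat V Z W ** transpose V) ** S ** (W ** matrix_inv (transpose V ** W)))
          = trace (transpose (Ymat V Z W) ** Ymat V Z W ** diagm lamV)"
    by (simp add: Y_def M_def)
  have "(transpose Y ** transpose Z) ** S ** (W ** M) = transpose Y ** (transpose Z ** S) ** (W ** M)"
    by (simp only: matrix_mul_assoc)
  also have "\<dots> = transpose Y ** diagm lamZ ** (transpose Z ** W ** M)"
    unfolding ZS by (simp only: matrix_mul_assoc)
  also have "\<dots> = transpose Y ** diagm lamZ ** Y" by (simp add: Y_def Ymat_def M_def)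
  finally show "trace ((transpose (Ymat V Z W) ** transpose Z) ** S ** (W ** matrix_inv (transpose V ** W)))
          = trace (transpose (Ymat V Z W) ** diagm lamZ ** Ymat V Z W)"
    by (simp add: Y_def M_def)
qed

lemma pathwise:
  fixes V :: "real^'k^'n" and Z :: "real^'m^'n" and W :: "real^'k^'n" and xv :: "real^'n"
  assumes inv: "invertible (transpose V ** W)" and ne: "1 + \<eta> * acoef V W xv \<noteq> 0" and eta: "0 \<le> \<eta>"
    and gapE: "gap * (norm (Ymat V Z W))\<^sup>2 \<le> e1 - e2"
  shows "(norm (Ymat V Z ((mat 1 + \<eta> *\<^sub>R outer xv xv) ** W)))\<^sup>2
         \<le> (1 - 2 * \<eta> * gap) * (norm (Ymat V Z W))\<^sup>2
           + (2 * \<eta> * (- trace (transpose (Ymat V Z W) ** Ymat V Z W ** Bmat V W xv) + e1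
                       + trace (transpose (Ymat V Z W) ** Cmat V Z W xv) - e2)
              + 2 * \<eta>\<^sup>2 * acoef V W xv / (1 + \<eta> * acoef V W xv)
                  * (trace (transpose (Ymat V Z W) ** Ymat V Z W ** Bmat V W xv) - trace (transpose (Ymat V Z W) ** Cmat V Z W xv))
              + 2 * \<eta>\<^sup>2 / (1 + \<eta> * acoef V W xv)\<^sup>2
                  * ((norm (Ymat V Z W ** Bmat V W xv))\<^sup>2 + (norm (Cmat V Z W xv))\<^sup>2))"
proof -
  define Y where "Y = Ymat V Z W"
  define B where "B = Bmat V W xv"
  define C where "C = Cmat V Z W xv"
  define a where "a = acoef V W xv"
  define c where "c = \<eta> / (1 + \<eta> * a)"
  define f1 where "f1 = trace (transpose Y ** Y ** B)"
  define f2 where "f2 = trace (transpose Y ** C)"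
  have Y': "Ymat V Z ((mat 1 + \<eta> *\<^sub>R outer xv xv) ** W) = Y + c *\<^sub>R (C - Y ** B)"
    using step_identity(2)[OF inv ne] by (simp add: Y_def B_def C_def c_def a_def)
  have f1i: "f1 = Y \<bullet> (Y ** B)" unfolding f1_def by (simp add: matrix_mul_assoc[symmetric] trace_inner)
  have f2i: "f2 = Y \<bullet> C" unfolding f2_def by (simp add: trace_inner)
  have ex0: "(norm (Y + c *\<^sub>R Dm))\<^sup>2 = (norm Y)\<^sup>2 + 2 * c * (Y \<bullet> Dm) + c\<^sup>2 * (norm Dm)\<^sup>2" for Dm :: "real^'k^'m"
    unfolding power2_norm_eq_inner
    by (simp add: inner_add_left inner_add_right inner_commute[of Dm Y] power2_eq_square algebra_simps)
  have YD: "Y \<bullet> (C - Y ** B) = f2 - f1" by (simp add: inner_diff_right f1i f2i)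
  have ex: "(norm (Y + c *\<^sub>R (C - Y ** B)))\<^sup>2 = (norm Y)\<^sup>2 + 2 * c * (f2 - f1) + c\<^sup>2 * (norm (C - Y ** B))\<^sup>2"
    unfolding ex0 YD ..
  have nb: "(norm (C - Y ** B))\<^sup>2 \<le> 2 * ((norm (Y ** B))\<^sup>2 + (norm C)\<^sup>2)"
  proof -
    have "norm (C - Y ** B) \<le> norm C + norm (Y ** B)" by (rule norm_triangle_ineq4)
    then have "(norm (C - Y ** B))\<^sup>2 \<le> (norm C + norm (Y ** B))\<^sup>2"
      by (rule power_mono) simp
    also have "\<dots> \<le> 2 * ((norm (Y ** B))\<^sup>2 + (norm C)\<^sup>2)"
    proof -
      have h: "0 \<le> (norm C - norm (Y ** B))\<^sup>2" by simp
      then show ?thesis unfolding power2_sum power2_diff distrib_left by linarith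
    qed
    finally show ?thesis .
  qed
  have c2: "2 * c = 2 * \<eta> - 2 * \<eta>\<^sup>2 * a / (1 + \<eta> * a)"
    using ne unfolding c_def a_def[symmetric] by (simp add: field_simps power2_eq_square)
  have cc: "c\<^sup>2 = \<eta>\<^sup>2 / (1 + \<eta> * a)\<^sup>2" unfolding c_def by (simp add: power_divide)
  have c2nn: "0 \<le> c\<^sup>2" by simp
  have "(norm (Ymat V Z ((mat 1 + \<eta> *\<^sub>R outer xv xv) ** W)))\<^sup>2
      \<le> (norm Y)\<^sup>2 + 2 * c * (f2 - f1) + c\<^sup>2 * (2 * ((norm (Y ** B))\<^sup>2 + (norm C)\<^sup>2))"
    unfolding Y' ex using mult_left_mono[OF nb c2nn] by simp
  also have "\<dots> = (norm Y)\<^sup>2 + 2 * \<eta> * (f2 - f1) + 2 * \<eta>\<^sup>2 * a / (1 + \<eta> * a) * (f1 - f2)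
      + 2 * \<eta>\<^sup>2 / (1 + \<eta> * a)\<^sup>2 * ((norm (Y ** B))\<^sup>2 + (norm C)\<^sup>2)"
  proof -
    define k where "k = 2 * \<eta>\<^sup>2 * a / (1 + \<eta> * a)"
    have "2 * c * (f2 - f1) = (2 * \<eta> - k) * (f2 - f1)" by (simp only: c2 k_def)
    also have "\<dots> = 2 * \<eta> * (f2 - f1) + k * (f1 - f2)" by (simp add: algebra_simps)
    finally have "2 * c * (f2 - f1) = 2 * \<eta> * (f2 - f1) + 2 * \<eta>\<^sup>2 * a / (1 + \<eta> * a) * (f1 - f2)"
      unfolding k_def .
    then show ?thesis unfolding cc by simp
  qed
  also have "\<dots> \<le> (1 - 2 * \<eta> * gap) * (norm Y)\<^sup>2
      + (2 * \<eta> * (- f1 + e1 + f2 - e2) + 2 * \<eta>\<^sup>2 * a / (1 + \<eta> * a) * (f1 - f2)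
      + 2 * \<eta>\<^sup>2 / (1 + \<eta> * a)\<^sup>2 * ((norm (Y ** B))\<^sup>2 + (norm C)\<^sup>2))"
  proof -
    have "0 \<le> 2 * \<eta> * (e1 - e2 - gap * (norm Y)\<^sup>2)"
      using eta gapE unfolding Y_def by simp
    then show ?thesis by (simp add: algebra_simps)
  qed
  finally show ?thesis by (simp add: Y_def B_def C_def a_def f1_def f2_def)
qed

lemma meas_trace[measurable (raw)]:
  fixes f :: "'w \<Rightarrow> real^'k^'k"
  assumes [measurable]: "f \<in> borel_measurable M"
  shows "(\<lambda>x. trace (f x)) \<in> borel_measurable M"
  unfolding trace_def by measurable

lemma Wrv_meas:
  assumes xm: "\<And>t. x t \<in> borel_measurable P"
  shows "s \<le> s' \<Longrightarrow> Wrv W0 eta x s \<in> borel_measurable (gen_filt P x s')"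
proof (induction s)
  case 0
  then show ?case by (simp add: Wrv_def)
next
  case (Suc s)
  have [measurable]: "x (Suc s) \<in> borel_measurable (gen_filt P x s')"
    by (rule gen_filt_meas[OF xm]) (use Suc in auto)
  have [measurable]: "Wrv W0 eta x s \<in> borel_measurable (gen_filt P x s')"
    using Suc by simp
  have eq: "Wrv W0 eta x (Suc s) = (\<lambda>\<omega>. (mat 1 + eta (Suc s) *\<^sub>R outer (x (Suc s) \<omega>) (x (Suc s) \<omega>)) ** Wrv W0 eta x s \<omega>)"
    by (simp add: Wrv_def fun_eq_iff)
  show ?case unfolding eq
    by (intro meas_mmult borel_measurable_add borel_measurable_const borel_measurable_scaleR meas_outer) fact+
qed

lemma phi1_meas:
  fixes V :: "real^'k^'n" and Z :: "real^'m^'n"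
  shows "case_prod (\<lambda>W y. trace (transpose (Ymat V Z W) ** Ymat V Z W ** Bmat V W y)) \<in> borel_measurable (borel \<Otimes>\<^sub>M borel)"
proof -
  have f: "(\<lambda>p. fst p) \<in> borel_measurable (borel \<Otimes>\<^sub>M borel :: ((real^'k^'n) \<times> (real^'n)) measure)"
    by (rule measurable_fst'') (rule measurable_ident_sets[OF refl])
  have g: "(\<lambda>p. snd p) \<in> borel_measurable (borel \<Otimes>\<^sub>M borel :: ((real^'k^'n) \<times> (real^'n)) measure)"
    by (rule measurable_snd'') (rule measurable_ident_sets[OF refl])
  have Ym: "(\<lambda>p. Ymat V Z (fst p)) \<in> borel_measurable (borel \<Otimes>\<^sub>M borel :: ((real^'k^'n) \<times> (real^'n)) measure)"
    unfolding Ymat_def by (intro meas_mmult meas_matrix_inv borel_measurable_const f)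
  have Bm: "(\<lambda>p. Bmat V (fst p) (snd p)) \<in> borel_measurable (borel \<Otimes>\<^sub>M borel :: ((real^'k^'n) \<times> (real^'n)) measure)"
    unfolding Bmat_def by (intro meas_mmult meas_matrix_inv meas_outer borel_measurable_const f g)
  have "(\<lambda>p. trace (transpose (Ymat V Z (fst p)) ** Ymat V Z (fst p) ** Bmat V (fst p) (snd p))) \<in> borel_measurable (borel \<Otimes>\<^sub>M borel :: ((real^'k^'n) \<times> (real^'n)) measure)"
    by (intro meas_trace meas_mmult meas_transpose Ym Bm)
  then show ?thesis by (simp add: split_beta')
qed

lemma phi2_meas:
  fixes V :: "real^'k^'n" and Z :: "real^'m^'n"
  shows "case_prod (\<lambda>W y. trace (transpose (Ymat V Z W) ** Cmat V Z W y)) \<in> borel_measurable (borel \<Otimes>\<^sub>M borel)"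
proof -
  have f: "(\<lambda>p. fst p) \<in> borel_measurable (borel \<Otimes>\<^sub>M borel :: ((real^'k^'n) \<times> (real^'n)) measure)"
    by (rule measurable_fst'') (rule measurable_ident_sets[OF refl])
  have g: "(\<lambda>p. snd p) \<in> borel_measurable (borel \<Otimes>\<^sub>M borel :: ((real^'k^'n) \<times> (real^'n)) measure)"
    by (rule measurable_snd'') (rule measurable_ident_sets[OF refl])
  have Ym: "(\<lambda>p. Ymat V Z (fst p)) \<in> borel_measurable (borel \<Otimes>\<^sub>M borel :: ((real^'k^'n) \<times> (real^'n)) measure)"
    unfolding Ymat_def by (intro meas_mmult meas_matrix_inv borel_measurable_const f)
  have Cm: "(\<lambda>p. Cmat V Z (fst p) (snd p)) \<in> borel_measurable (borel \<Otimes>\<^sub>M borel :: ((real^'k^'n) \<times> (real^'n)) measure)"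
    unfolding Cmat_def by (intro meas_mmult meas_matrix_inv meas_outer borel_measurable_const f g)
  have "(\<lambda>p. trace (transpose (Ymat V Z (fst p)) ** Cmat V Z (fst p) (snd p))) \<in> borel_measurable (borel \<Otimes>\<^sub>M borel :: ((real^'k^'n) \<times> (real^'n)) measure)"
    by (intro meas_trace meas_mmult meas_transpose Ym Cm)
  then show ?thesis by (simp add: split_beta')
qed

theorem mainTheorem6:
  fixes D :: "(real^'n::finite) measure"
    and P :: "'w measure"
    and x :: "nat \<Rightarrow> 'w \<Rightarrow> real^'n"
    and V :: "real^'k::finite^'n" and Z :: "real^'m::finite^'n"
    and lamV :: "'k \<Rightarrow> real" and lamZ :: "'m \<Rightarrow> real"
    and W0 :: "real^'k^'n" and eta :: "nat \<Rightarrow> real"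
  assumes dims: "CARD('k) + CARD('m) = CARD('n)"
    and D_prob: "prob_space D" and D_sets: "sets D = sets borel"
    and D_sphere: "AE y in D. norm y = 1"
    and V_orth: "transpose V ** V = mat 1"
    and Z_orth: "transpose Z ** Z = mat 1"
    and VZ_orth: "transpose V ** Z = 0"
    and V_eig: "\<And>j. second_moment D *v column j V = lamV j *\<^sub>R column j V"
    and Z_eig: "\<And>j. second_moment D *v column j Z = lamZ j *\<^sub>R column j Z"
    and order: "\<And>i j. lamZ j \<le> lamV i"
    and P_prob: "prob_space P"
    and x_meas: "\<And>t. x t \<in> borel_measurable P"
    and x_indep: "prob_space.indep_vars P (\<lambda>_. borel) x {1..}"
    and x_distr: "\<And>t. 1 \<le> t \<Longrightarrow> distr P borel (x t) = D"
  defines "gap \<equiv> Min (range lamV) - Max (range lamZ)"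
  shows
    "(\<forall>t. 1 \<le> t \<longrightarrow> 0 \<le> eta t \<longrightarrow>
        (AE \<omega> in P.
           invertible (transpose V ** Wrv W0 eta x (t - 1) \<omega>)
           \<and> 1 + eta t * acoef V (Wrv W0 eta x (t - 1) \<omega>) (x t \<omega>) \<noteq> 0
           \<longrightarrow> invertible (transpose V ** Wrv W0 eta x t \<omega>)
               \<and> Xrv V Z W0 eta x t \<omega>
                   \<le> (1 - 2 * eta t * gap) * Xrv V Z W0 eta x (t - 1) \<omega>
                     + Nrv P V Z W0 eta x t \<omega>))
     \<and>
     (\<forall>T0. (\<forall>t>T0. 0 \<le> eta t \<and> 0 < 1 - 2 * eta t * gap) \<longrightarrow>
        (AE \<omega> in P.
           (\<forall>t>T0. invertible (transpose V ** Wrv W0 eta x (t - 1) \<omega>)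
                   \<and> 1 + eta t * acoef V (Wrv W0 eta x (t - 1) \<omega>) (x t \<omega>) \<noteq> 0)
           \<longrightarrow> (\<forall>t>T0. Xrv V Z W0 eta x t \<omega>
                 \<le> (\<Prod>t'\<in>{T0+1..t}. 1 - 2 * eta t' * gap)
                   * (Xrv V Z W0 eta x T0 \<omega>
                      + (\<Sum>t'\<in>{T0+1..t}.
                           Nrv P V Z W0 eta x t' \<omega> / (\<Prod>t''\<in>{T0+1..t'}. 1 - 2 * eta t'' * gap))))))"
proof -
  interpret P: prob_space P by (rule P_prob)
  have sym: "transpose (second_moment D) = second_moment D" by (rule second_moment_sym)
  have VS: "transpose V ** second_moment D = diagm lamV ** transpose V" by (rule eig_left[OF sym V_eig])
  have ZS: "transpose Z ** second_moment D = diagm lamZ ** transpose Z" by (rule eig_left[OF sym Z_eig])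
  have minV: "Min (range lamV) \<le> lamV j" for j by (rule Min_le) simp_all
  have maxZ: "lamZ j \<le> Max (range lamZ)" for j by (rule Max_ge) simp_all
  have gapE: "gap * (norm (Ymat V Z W))\<^sup>2 \<le> trace (transpose (Ymat V Z W) ** Ymat V Z W ** diagm lamV)
      - trace (transpose (Ymat V Z W) ** diagm lamZ ** Ymat V Z W)" for W :: "real^'k^'n"
  proof -
    have a: "Min (range lamV) * (norm (Ymat V Z W))\<^sup>2 \<le> trace (transpose (Ymat V Z W) ** Ymat V Z W ** diagm lamV)"
      by (rule trace_YYdiag) (rule minV)
    have b: "trace (transpose (Ymat V Z W) ** diagm lamZ ** Ymat V Z W) \<le> Max (range lamZ) * (norm (Ymat V Z W))\<^sup>2"
      by (rule trace_YdiagY) (rule maxZ)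
    show ?thesis using a b unfolding gap_def by (simp add: left_diff_distrib)
  qed
  have step: "AE \<omega> in P.
           invertible (transpose V ** Wrv W0 eta x (t - 1) \<omega>)
           \<and> 1 + eta t * acoef V (Wrv W0 eta x (t - 1) \<omega>) (x t \<omega>) \<noteq> 0
           \<longrightarrow> invertible (transpose V ** Wrv W0 eta x t \<omega>)
               \<and> Xrv V Z W0 eta x t \<omega>
                   \<le> (1 - 2 * eta t * gap) * Xrv V Z W0 eta x (t - 1) \<omega>
                     + Nrv P V Z W0 eta x t \<omega>"
    if t1: "1 \<le> t" and et: "0 \<le> eta t" for t
  proof -
    obtain s where ts: "t = Suc s" using t1 by (cases t) auto
    define F where "F = gen_filt P x s"
    define G where "G = Wrv W0 eta x s"
    define \<phi>1 where "\<phi>1 = (\<lambda>(W::real^'k^'n) y. trace (transpose (Ymat V Z W) ** Ymat V Z W ** Bmat V W y))"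
    define \<phi>2 where "\<phi>2 = (\<lambda>(W::real^'k^'n) y. trace (transpose (Ymat V Z W) ** Cmat V Z W y))"
    have sub: "subalgebra P F" unfolding F_def by (rule gen_filt_sub[OF x_meas])
    have GF: "G \<in> borel_measurable F" unfolding G_def F_def by (rule Wrv_meas[OF x_meas]) simp
    have ind: "P.indep_set (sets F) (sigma_sets (space P) {x t -` A \<inter> space P | A. A \<in> sets borel})"
      unfolding F_def ts by (rule gen_filt_indep[OF P_prob x_meas x_indep])
    have DX: "distr P borel (x t) = D" by (rule x_distr[OF t1])
    have m1: "case_prod \<phi>1 \<in> borel_measurable (borel \<Otimes>\<^sub>M borel)"
      unfolding \<phi>1_def by (rule phi1_meas)
    have m2: "case_prod \<phi>2 \<in> borel_measurable (borel \<Otimes>\<^sub>M borel)"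
      unfolding \<phi>2_def by (rule phi2_meas)
    have i1: "integrable D (\<phi>1 W)" for W
      unfolding \<phi>1_def by (rule expect_E1(1)[OF D_prob D_sets D_sphere])
    have i2: "integrable D (\<phi>2 W)" for W
      unfolding \<phi>2_def by (rule expect_E1(2)[OF D_prob D_sets D_sphere])
    have ae1: "AE \<omega> in P. real_cond_exp P F (\<lambda>\<omega>. \<phi>1 (G \<omega>) (x t \<omega>)) \<omega> = (\<integral>y. \<phi>1 (G \<omega>) y \<partial>D)"
      by (rule cond_exp_indep_real[OF P_prob sub GF x_meas ind DX m1 i1])
    have ae2: "AE \<omega> in P. real_cond_exp P F (\<lambda>\<omega>. \<phi>2 (G \<omega>) (x t \<omega>)) \<omega> = (\<integral>y. \<phi>2 (G \<omega>) y \<partial>D)"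
      by (rule cond_exp_indep_real[OF P_prob sub GF x_meas ind DX m2 i2])
    have Wp_eq: "Wrv W0 eta x (t - 1) = G" by (simp add: G_def ts)
    have F_eq: "gen_filt P x (t - 1) = F" by (simp add: F_def ts)
    have f1eq: "trYYB V Z W0 eta x t = (\<lambda>\<omega>. \<phi>1 (G \<omega>) (x t \<omega>))"
      unfolding trYYB_def Let_def Wp_eq \<phi>1_def by (rule refl)
    have f2eq: "trYC V Z W0 eta x t = (\<lambda>\<omega>. \<phi>2 (G \<omega>) (x t \<omega>))"
      unfolding trYC_def Let_def Wp_eq \<phi>2_def by (rule refl)
    show ?thesis using ae1 ae2
    proof eventually_elim
      case (elim \<omega>)
      show ?case
      proof
        assume hyp: "invertible (transpose V ** Wrv W0 eta x (t - 1) \<omega>)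
           \<and> 1 + eta t * acoef V (Wrv W0 eta x (t - 1) \<omega>) (x t \<omega>) \<noteq> 0"
        have inv: "invertible (transpose V ** G \<omega>)" using hyp unfolding Wp_eq by simp
        have ne: "1 + eta t * acoef V (G \<omega>) (x t \<omega>) \<noteq> 0" using hyp unfolding Wp_eq by simp
        have W_t: "Wrv W0 eta x t \<omega> = (mat 1 + eta t *\<^sub>R outer (x t \<omega>) (x t \<omega>)) ** G \<omega>"
          by (simp add: Wrv_def G_def ts)
        have e1: "(\<integral>y. \<phi>1 (G \<omega>) y \<partial>D) = trace (transpose (Ymat V Z (G \<omega>)) ** Ymat V Z (G \<omega>) ** diagm lamV)"
          unfolding \<phi>1_def expect_E1(3)[OF D_prob D_sets D_sphere] by (rule E1_value(1)[OF inv VS ZS])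
        have e2: "(\<integral>y. \<phi>2 (G \<omega>) y \<partial>D) = trace (transpose (Ymat V Z (G \<omega>)) ** diagm lamZ ** Ymat V Z (G \<omega>))"
          unfolding \<phi>2_def expect_E1(4)[OF D_prob D_sets D_sphere] by (rule E1_value(2)[OF inv VS ZS])
        have gE: "gap * (norm (Ymat V Z (G \<omega>)))\<^sup>2 \<le> (\<integral>y. \<phi>1 (G \<omega>) y \<partial>D) - (\<integral>y. \<phi>2 (G \<omega>) y \<partial>D)"
          unfolding e1 e2 by (rule gapE)
        have r1: "real_cond_exp P (gen_filt P x (t - 1)) (trYYB V Z W0 eta x t) \<omega> = (\<integral>y. \<phi>1 (G \<omega>) y \<partial>D)"
          unfolding F_eq f1eq by (rule elim(1))
        have r2: "real_cond_exp P (gen_filt P x (t - 1)) (trYC V Z W0 eta x t) \<omega> = (\<integral>y. \<phi>2 (G \<omega>) y \<partial>D)"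
          unfolding F_eq f2eq by (rule elim(2))
        have N_eq: "Nrv P V Z W0 eta x t \<omega> =
           2 * eta t * (- \<phi>1 (G \<omega>) (x t \<omega>) + (\<integral>y. \<phi>1 (G \<omega>) y \<partial>D) + \<phi>2 (G \<omega>) (x t \<omega>) - (\<integral>y. \<phi>2 (G \<omega>) y \<partial>D))
         + 2 * (eta t)\<^sup>2 * acoef V (G \<omega>) (x t \<omega>) / (1 + eta t * acoef V (G \<omega>) (x t \<omega>)) * (\<phi>1 (G \<omega>) (x t \<omega>) - \<phi>2 (G \<omega>) (x t \<omega>))
         + 2 * (eta t)\<^sup>2 / (1 + eta t * acoef V (G \<omega>) (x t \<omega>))\<^sup>2 * ((norm (Ymat V Z (G \<omega>) ** Bmat V (G \<omega>) (x t \<omega>)))\<^sup>2 + (norm (Cmat V Z (G \<omega>) (x t \<omega>)))\<^sup>2)"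
          unfolding Nrv_def Let_def r1 r2 unfolding f1eq f2eq Wp_eq ..
        have X_t: "Xrv V Z W0 eta x t \<omega> = (norm (Ymat V Z ((mat 1 + eta t *\<^sub>R outer (x t \<omega>) (x t \<omega>)) ** G \<omega>)))\<^sup>2"
          by (simp add: Xrv_def W_t)
        have X_p: "Xrv V Z W0 eta x (t - 1) \<omega> = (norm (Ymat V Z (G \<omega>)))\<^sup>2"
          by (simp only: Xrv_def Wp_eq)
        have main: "(norm (Ymat V Z ((mat 1 + eta t *\<^sub>R outer (x t \<omega>) (x t \<omega>)) ** G \<omega>)))\<^sup>2
         \<le> (1 - 2 * eta t * gap) * (norm (Ymat V Z (G \<omega>)))\<^sup>2
           + (2 * eta t * (- trace (transpose (Ymat V Z (G \<omega>)) ** Ymat V Z (G \<omega>) ** Bmat V (G \<omega>) (x t \<omega>)) + (\<integral>y. \<phi>1 (G \<omega>) y \<partial>D)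
                       + trace (transpose (Ymat V Z (G \<omega>)) ** Cmat V Z (G \<omega>) (x t \<omega>)) - (\<integral>y. \<phi>2 (G \<omega>) y \<partial>D))
              + 2 * (eta t)\<^sup>2 * acoef V (G \<omega>) (x t \<omega>) / (1 + eta t * acoef V (G \<omega>) (x t \<omega>))
                  * (trace (transpose (Ymat V Z (G \<omega>)) ** Ymat V Z (G \<omega>) ** Bmat V (G \<omega>) (x t \<omega>)) - trace (transpose (Ymat V Z (G \<omega>)) ** Cmat V Z (G \<omega>) (x t \<omega>)))
              + 2 * (eta t)\<^sup>2 / (1 + eta t * acoef V (G \<omega>) (x t \<omega>))\<^sup>2
                  * ((norm (Ymat V Z (G \<omega>) ** Bmat V (G \<omega>) (x t \<omega>)))\<^sup>2 + (norm (Cmat V Z (G \<omega>) (x t \<omega>)))\<^sup>2))"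
          by (rule pathwise[OF inv ne et gE])
        show "invertible (transpose V ** Wrv W0 eta x t \<omega>) \<and>
          Xrv V Z W0 eta x t \<omega> \<le> (1 - 2 * eta t * gap) * Xrv V Z W0 eta x (t - 1) \<omega> + Nrv P V Z W0 eta x t \<omega>"
        proof
          show "invertible (transpose V ** Wrv W0 eta x t \<omega>)"
            unfolding W_t by (rule step_identity(1)[OF inv ne])
          show "Xrv V Z W0 eta x t \<omega> \<le> (1 - 2 * eta t * gap) * Xrv V Z W0 eta x (t - 1) \<omega> + Nrv P V Z W0 eta x t \<omega>"
            unfolding X_t X_p N_eq using main unfolding \<phi>1_def \<phi>2_def by simp
        qed
      qed
    qed
  qed
  show ?thesis
  proof (intro conjI allI impI)
    fix t :: nat assume "1 \<le> t" "0 \<le> eta t"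
    then show "AE \<omega> in P.
           invertible (transpose V ** Wrv W0 eta x (t - 1) \<omega>)
           \<and> 1 + eta t * acoef V (Wrv W0 eta x (t - 1) \<omega>) (x t \<omega>) \<noteq> 0
           \<longrightarrow> invertible (transpose V ** Wrv W0 eta x t \<omega>)
               \<and> Xrv V Z W0 eta x t \<omega>
                   \<le> (1 - 2 * eta t * gap) * Xrv V Z W0 eta x (t - 1) \<omega>
                     + Nrv P V Z W0 eta x t \<omega>" by (rule step)
  next
    fix T0 :: nat
    assume H: "\<forall>t>T0. 0 \<le> eta t \<and> 0 < 1 - 2 * eta t * gap"
    define c where "c t = 1 - 2 * eta t * gap" for t
    have cpos: "0 < c t" if "T0 < t" for t using H that unfolding c_def by blast
    have allstep: "AE \<omega> in P. \<forall>t. T0 < t \<longrightarrow>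
           (invertible (transpose V ** Wrv W0 eta x (t - 1) \<omega>)
           \<and> 1 + eta t * acoef V (Wrv W0 eta x (t - 1) \<omega>) (x t \<omega>) \<noteq> 0
           \<longrightarrow> Xrv V Z W0 eta x t \<omega>
                   \<le> c t * Xrv V Z W0 eta x (t - 1) \<omega> + Nrv P V Z W0 eta x t \<omega>)"
    proof (subst AE_all_countable, intro allI)
      fix t
      show "AE \<omega> in P. T0 < t \<longrightarrow>
           (invertible (transpose V ** Wrv W0 eta x (t - 1) \<omega>)
           \<and> 1 + eta t * acoef V (Wrv W0 eta x (t - 1) \<omega>) (x t \<omega>) \<noteq> 0
           \<longrightarrow> Xrv V Z W0 eta x t \<omega>
                   \<le> c t * Xrv V Z W0 eta x (t - 1) \<omega> + Nrv P V Z W0 eta x t \<omega>)"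
      proof (cases "T0 < t")
        case True
        then have "1 \<le> t" "0 \<le> eta t" using H by auto
        from step[OF this] show ?thesis unfolding c_def by eventually_elim auto
      qed simp
    qed
    show "AE \<omega> in P.
           (\<forall>t>T0. invertible (transpose V ** Wrv W0 eta x (t - 1) \<omega>)
                   \<and> 1 + eta t * acoef V (Wrv W0 eta x (t - 1) \<omega>) (x t \<omega>) \<noteq> 0)
           \<longrightarrow> (\<forall>t>T0. Xrv V Z W0 eta x t \<omega>
                 \<le> (\<Prod>t'\<in>{T0+1..t}. 1 - 2 * eta t' * gap)
                   * (Xrv V Z W0 eta x T0 \<omega>
                      + (\<Sum>t'\<in>{T0+1..t}.
                           Nrv P V Z W0 eta x t' \<omega> / (\<Prod>t''\<in>{T0+1..t'}. 1 - 2 * eta t'' * gap))))"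
      using allstep
    proof eventually_elim
      case (elim \<omega>)
      define X where "X t = Xrv V Z W0 eta x t \<omega>" for t
      define N where "N t = Nrv P V Z W0 eta x t \<omega>" for t
      define Pr where "Pr t = (\<Prod>t'\<in>{T0+1..t}. c t')" for t
      show ?case
      proof (intro impI allI)
        assume hyps: "\<forall>t>T0. invertible (transpose V ** Wrv W0 eta x (t - 1) \<omega>)
                   \<and> 1 + eta t * acoef V (Wrv W0 eta x (t - 1) \<omega>) (x t \<omega>) \<noteq> 0"
        have rec: "X t \<le> c t * X (t - 1) + N t" if "T0 < t" for t
          using elim hyps that unfolding X_def N_def by blast
        have Prpos: "0 < Pr t" for t
          unfolding Pr_def by (rule prod_pos) (auto intro: cpos)
        have Prsuc: "Pr (Suc t) = Pr t * c (Suc t)" if "T0 \<le> t" for t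
          unfolding Pr_def using that by (simp add: prod.nat_ivl_Suc' mult.commute)
        have Ssuc: "(\<Sum>t'\<in>{T0+1..Suc t}. N t' / Pr t') = (\<Sum>t'\<in>{T0+1..t}. N t' / Pr t') + N (Suc t) / Pr (Suc t)" if "T0 \<le> t" for t
          using that by (simp add: sum.nat_ivl_Suc')
        have claim: "X (T0 + 1 + d) \<le> Pr (T0 + 1 + d) * (X T0 + (\<Sum>t'\<in>{T0+1..T0 + 1 + d}. N t' / Pr t'))" for d
        proof (induction d)
          case 0
          have P1: "Pr (T0 + 1) = c (T0 + 1)" unfolding Pr_def by simp
          have "X (T0 + 1) \<le> c (T0 + 1) * X T0 + N (T0 + 1)" using rec[of "T0 + 1"] by simp
          also have "\<dots> = Pr (T0 + 1) * (X T0 + N (T0 + 1) / Pr (T0 + 1))"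
            using Prpos[of "T0 + 1"] unfolding P1 by (simp add: field_simps)
          finally show ?case by simp
        next
          case (Suc d)
          define t where "t = T0 + 1 + d"
          have tt: "T0 + 1 + Suc d = Suc t" by (simp add: t_def)
          have T0t: "T0 \<le> t" by (simp add: t_def)
          have IH: "X t \<le> Pr t * (X T0 + (\<Sum>t'\<in>{T0+1..t}. N t' / Pr t'))" using Suc.IH by (simp add: t_def)
          have "X (Suc t) \<le> c (Suc t) * X t + N (Suc t)" using rec[of "Suc t"] T0t by simp
          also have "\<dots> \<le> c (Suc t) * (Pr t * (X T0 + (\<Sum>t'\<in>{T0+1..t}. N t' / Pr t'))) + N (Suc t)"
            using mult_left_mono[OF IH less_imp_le[OF cpos[of "Suc t"]]] T0t by simp
          also have "\<dots> = Pr (Suc t) * (X T0 + (\<Sum>t'\<in>{T0+1..Suc t}. N t' / Pr t'))"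
          proof -
            define A where "A = X T0 + (\<Sum>t'\<in>{T0+1..t}. N t' / Pr t')"
            define p where "p = Pr t * c (Suc t)"
            have pne: "p \<noteq> 0" using Prpos[of t] cpos[of "Suc t"] T0t unfolding p_def by simp
            have "c (Suc t) * (Pr t * A) + N (Suc t) = p * A + p * (N (Suc t) / p)"
              using pne unfolding p_def by (simp add: mult_ac)
            also have "\<dots> = p * (A + N (Suc t) / p)" by (simp only: distrib_left)
            finally have "c (Suc t) * (Pr t * A) + N (Suc t) = p * (A + N (Suc t) / p)" .
            then show ?thesis unfolding Ssuc[OF T0t] Prsuc[OF T0t] A_def p_def by (simp only: add.assoc)
          qed
          finally show ?case unfolding tt .
        qed
        fix t assume "T0 < t"
        define d where "d = t - T0 - 1"
        have d: "t = T0 + 1 + d" using \<open>T0 < t\<close> unfolding d_def by simp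
        show "Xrv V Z W0 eta x t \<omega>
                 \<le> (\<Prod>t'\<in>{T0+1..t}. 1 - 2 * eta t' * gap)
                   * (Xrv V Z W0 eta x T0 \<omega>
                      + (\<Sum>t'\<in>{T0+1..t}.
                           Nrv P V Z W0 eta x t' \<omega> / (\<Prod>t''\<in>{T0+1..t'}. 1 - 2 * eta t'' * gap)))"
          using claim[of d] unfolding d X_def N_def Pr_def c_def .
      qed
    qed
  qed
qed

end
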